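(* Suppose $C\subseteq\mathbb{R}^n$ is smoothly approximately convex at $\bar x\in C$, and let $H:U\to\mathbb{R}^m$, where $U$ is an open neighborhood of $\bar x$ in $\mathbb{R}^n$, be a $\mathcal{C}^{(1)}$-smooth embedding. Then $H(C\cap U)$ is smoothly approximately convex at $H(\bar x)$.
   Context: A $\mathcal{C}^{(1)}$-smooth embedding is a $\mathcal{C}^{(1)}$ map $H$ with $\nabla H(w)$ injective for all $w$ that is a homeomorphism onto its image. A set $S\subseteq\mathbb{R}^N$ is smoothly approximately convex at $\bar z\in S$ if for every $\epsilon>0$ there is a neighborhood $W$ of $\bar z$ such that for all $z,z'\in S\cap W$ there is a map $\gamma:[0,1]\to S$, extending to a $\mathcal{C}^{(1)}$ map on an open neighborhood of $[0,1]$, with $\gamma(0)=z,\gamma(1)=z'$ and $\|\gamma'(t)-(z'-z)\|\le\epsilon\|z'-z\|$ for all $t\in[0,1]$. *)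

theory Defs
  imports "HOL-Analysis.Analysis"
begin

definition smooth_embedding :: "'a::euclidean_space set \<Rightarrow> ('a \<Rightarrow> 'b::euclidean_space) \<Rightarrow> bool" where
  "smooth_embedding U H \<longleftrightarrow>
     (\<exists>H'. (\<forall>w\<in>U. (H has_derivative blinfun_apply (H' w)) (at w))
          \<and> continuous_on U H'
          \<and> (\<forall>w\<in>U. inj (blinfun_apply (H' w))))
     \<and> (\<exists>G. homeomorphism U (H ` U) H G)"

text \<open>The curve gamma is required
  to be C1 on an open set V containing [0,1] (this is the extension), to map
  [0,1] into S, and its derivative gamma' satisfies the estimate on [0,1].\<close>
definition smoothly_approx_convex :: "'a::euclidean_space set \<Rightarrow> 'a \<Rightarrow> bool" where
  "smoothly_approx_convex S zbar \<longleftrightarrow>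
     (\<forall>\<epsilon>>0. \<exists>W. open W \<and> zbar \<in> W \<and>
        (\<forall>z\<in>S \<inter> W. \<forall>z'\<in>S \<inter> W.
           \<exists>\<gamma> \<gamma>' V. open V \<and> {0..1::real} \<subseteq> V
             \<and> (\<forall>t\<in>V. (\<gamma> has_vector_derivative \<gamma>' t) (at t))
             \<and> continuous_on V \<gamma>'
             \<and> \<gamma> ` {0..1} \<subseteq> S \<and> \<gamma> 0 = z \<and> \<gamma> 1 = z'
             \<and> (\<forall>t\<in>{0..1}. norm (\<gamma>' t - (z' - z)) \<le> \<epsilon> * norm (z' - z))))"

end

theory Submission
  imports Defs
begin

lemma curve_bound:
  fixes \<sigma> :: "real \<Rightarrow> 'a::euclidean_space"
  assumes V: "open V" "{0..1} \<subseteq> V"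
    and der: "\<And>t. t \<in> V \<Longrightarrow> (\<sigma> has_vector_derivative \<sigma>' t) (at t)"
    and bd: "\<And>t. t \<in> {0..1} \<Longrightarrow> norm (\<sigma>' t) \<le> K"
    and t: "t \<in> {0..1}"
  shows "norm (\<sigma> t - \<sigma> 0) \<le> K * t"
proof (cases "t = 0")
  case True then show ?thesis by simp
next
  case False
  then have t0: "0 < t" using t by auto
  have cont: "continuous_on {0..t} \<sigma>"
    apply (rule continuous_at_imp_continuous_on)
    using der V t by (meson atLeastAtMost_iff has_vector_derivative_continuous subsetD order_trans)
  have "norm (\<sigma> t - \<sigma> 0) \<le> K * t - K * 0"
    apply (rule differentiable_bound_general[where f'=\<sigma>' and \<phi>'="\<lambda>_. K", OF t0 cont])
       apply (intro continuous_intros)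
    subgoal for x using der V t by (simp add: subset_eq)
    subgoal for x using has_vector_derivative_mult_right[OF has_vector_derivative_id[of "at x"], of K] by (simp add: has_vector_derivative_id mult.commute)
    subgoal for x using bd t by auto
    done
  then show ?thesis by simp
qed

theorem lemma3p5:
  fixes C :: "'a::euclidean_space set" and H :: "'a \<Rightarrow> 'b::euclidean_space"
    and U :: "'a set" and xbar :: 'a
  assumes "xbar \<in> C" and "smoothly_approx_convex C xbar"
    and "open U" and "xbar \<in> U"
    and "smooth_embedding U H"
  shows "smoothly_approx_convex (H ` (C \<inter> U)) (H xbar)"
proof -
  from assms(5) obtain H' G where
    Hd: "\<And>w. w \<in> U \<Longrightarrow> (H has_derivative blinfun_apply (H' w)) (at w)"
    and H'c: "continuous_on U H'" and Hinj: "\<And>w. w \<in> U \<Longrightarrow> inj (blinfun_apply (H' w))"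
    and hom: "homeomorphism U (H ` U) H G"
    unfolding smooth_embedding_def by blast
  have GH: "\<And>x. x \<in> U \<Longrightarrow> G (H x) = x" and Gc: "continuous_on (H ` U) G"
    using hom by (auto simp: homeomorphism_def)
  define A where "A = H' xbar"
  obtain m where m0: "m > 0" and mA: "\<And>v. m * norm v \<le> norm (blinfun_apply A v)"
    using linear_inj_bounded_below_pos[of "blinfun_apply A"] Hinj[OF assms(4)] unfolding A_def
    by (metis blinfun.bounded_linear_right bounded_linear.linear)
  show ?thesis unfolding smoothly_approx_convex_def
  proof (intro allI impI)
    fix \<epsilon> :: real assume e0: "\<epsilon> > 0"
    define \<kappa> where "\<kappa> = min (m/2) (\<epsilon>*m/12)"
    define \<eta> where "\<eta> = min 1 (\<epsilon>*m/(4*(norm A + 1)))"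
    have k0: "\<kappa> > 0" using m0 e0 by (auto simp: \<kappa>_def)
    have eta0: "\<eta> > 0" using m0 e0 by (auto simp: \<eta>_def intro!: divide_pos_pos add_nonneg_pos)
    have eta1: "\<eta> \<le> 1" by (simp add: \<eta>_def)
    have km: "\<kappa> \<le> m/2" by (simp add: \<kappa>_def)
    have "\<eta> * (4*(norm A + 1)) \<le> \<epsilon>*m"
    proof -
      have "\<eta> \<le> \<epsilon>*m/(4*(norm A + 1))" by (simp add: \<eta>_def)
      then show ?thesis by (simp add: pos_le_divide_eq add_nonneg_pos)
    qed
    then have "norm A * \<eta> \<le> \<epsilon>*m/4" using eta0 by (simp add: algebra_simps)
    then have kA: "3*\<kappa> + norm A * \<eta> \<le> \<epsilon>*m/2" by (simp add: \<kappa>_def)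
    obtain d1 where d1: "d1 > 0" "\<And>w. w \<in> U \<Longrightarrow> dist w xbar < d1 \<Longrightarrow> dist (H' w) (H' xbar) < \<kappa>"
      using H'c assms(4) k0 unfolding continuous_on_iff by blast
    obtain d2 where d2: "d2 > 0" "ball xbar d2 \<subseteq> U"
      using assms(3,4) open_contains_ball by blast
    define r where "r = min d1 d2"
    have r0: "r > 0" using d1 d2 by (simp add: r_def)
    have rU: "ball xbar r \<subseteq> U" using d2 by (auto simp: r_def)
    have rk: "\<And>w. w \<in> ball xbar r \<Longrightarrow> norm (H' w - A) \<le> \<kappa>"
    proof -
      fix w assume w: "w \<in> ball xbar r"
      have "w \<in> U" using rU w by blast
      moreover have "dist w xbar < d1" using w by (simp add: r_def dist_commute)
      ultimately have "dist (H' w) (H' xbar) < \<kappa>" using d1 by blast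
      then show "norm (H' w - A) \<le> \<kappa>" by (simp add: A_def dist_norm)
    qed
    obtain WC where WC: "open WC" "xbar \<in> WC" and
      P: "\<forall>z\<in>C \<inter> WC. \<forall>z'\<in>C \<inter> WC.
           \<exists>\<gamma> \<gamma>' V. open V \<and> {0..1::real} \<subseteq> V
             \<and> (\<forall>t\<in>V. (\<gamma> has_vector_derivative \<gamma>' t) (at t))
             \<and> continuous_on V \<gamma>'
             \<and> \<gamma> ` {0..1} \<subseteq> C \<and> \<gamma> 0 = z \<and> \<gamma> 1 = z'
             \<and> (\<forall>t\<in>{0..1}. norm (\<gamma>' t - (z' - z)) \<le> \<eta> * norm (z' - z))"
      using assms(2)[unfolded smoothly_approx_convex_def, rule_format, OF eta0] by blast
    define Ob where "Ob = ball xbar (r/8) \<inter> WC"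
    have "open Ob" using WC by (simp add: Ob_def open_Int)
    then obtain W where W: "open W" "W \<inter> H ` U = G -` Ob \<inter> H ` U"
      using Gc unfolding continuous_on_open_invariant by blast
    have "H xbar \<in> W"
    proof -
      have "G (H xbar) \<in> Ob" using GH[OF assms(4)] WC r0 by (simp add: Ob_def)
      then show ?thesis using W(2) assms(4) by blast
    qed
    have preim: "\<And>y. y \<in> H ` (C \<inter> U) \<inter> W \<Longrightarrow> \<exists>z. z \<in> C \<inter> U \<and> y = H z \<and> z \<in> WC \<and> norm (z - xbar) < r/8"
    proof -
      fix y assume y: "y \<in> H ` (C \<inter> U) \<inter> W"
      then obtain z where z: "z \<in> C \<inter> U" "y = H z" by blast
      then have "y \<in> W \<inter> H ` U" using y by blast
      then have "G y \<in> Ob" using W(2) by blast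
      then have "z \<in> Ob" using GH z by simp
      then show "\<exists>z. z \<in> C \<inter> U \<and> y = H z \<and> z \<in> WC \<and> norm (z - xbar) < r/8"
        using z by (auto simp: Ob_def dist_norm norm_minus_commute)
    qed
    show "\<exists>W. open W \<and> H xbar \<in> W \<and>
        (\<forall>y\<in>H ` (C \<inter> U) \<inter> W. \<forall>y'\<in>H ` (C \<inter> U) \<inter> W.
           \<exists>\<gamma> \<gamma>' V. open V \<and> {0..1::real} \<subseteq> V
             \<and> (\<forall>t\<in>V. (\<gamma> has_vector_derivative \<gamma>' t) (at t))
             \<and> continuous_on V \<gamma>'
             \<and> \<gamma> ` {0..1} \<subseteq> H ` (C \<inter> U) \<and> \<gamma> 0 = y \<and> \<gamma> 1 = y'
             \<and> (\<forall>t\<in>{0..1}. norm (\<gamma>' t - (y' - y)) \<le> \<epsilon> * norm (y' - y)))"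
    proof (intro exI[of _ W] conjI ballI)
      show "open W" by fact
      show "H xbar \<in> W" by fact
      fix y y' assume y: "y \<in> H ` (C \<inter> U) \<inter> W" and y': "y' \<in> H ` (C \<inter> U) \<inter> W"
      obtain z where z: "z \<in> C \<inter> U" "y = H z" "z \<in> WC" "norm (z - xbar) < r/8"
        using preim[OF y] by blast
      obtain z' where z': "z' \<in> C \<inter> U" "y' = H z'" "z' \<in> WC" "norm (z' - xbar) < r/8"
        using preim[OF y'] by blast
      define d where "d = z' - z"
      have dr: "norm d < r/4"
      proof -
        have "norm d \<le> norm (z' - xbar) + norm (z - xbar)"
        proof -
          have "d = (z' - xbar) - (z - xbar)" by (simp add: d_def)
          then show ?thesis using norm_triangle_ineq4[of "z' - xbar" "z - xbar"] by simp
        qed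
        then show ?thesis using z z' by simp
      qed
      obtain \<sigma> \<sigma>' V\<sigma> where V\<sigma>: "open V\<sigma>" "{0..1::real} \<subseteq> V\<sigma>"
        and \<sigma>d: "\<forall>t\<in>V\<sigma>. (\<sigma> has_vector_derivative \<sigma>' t) (at t)"
        and \<sigma>'c: "continuous_on V\<sigma> \<sigma>'"
        and \<sigma>C: "\<sigma> ` {0..1} \<subseteq> C" and \<sigma>0: "\<sigma> 0 = z" and \<sigma>1: "\<sigma> 1 = z'"
        and \<sigma>e: "\<forall>t\<in>{0..1}. norm (\<sigma>' t - d) \<le> \<eta> * norm d"
      proof -
        have "z \<in> C \<inter> WC" "z' \<in> C \<inter> WC" using z z' by auto
        from P[rule_format, OF this] show ?thesis unfolding d_def
          by (elim exE conjE) (rule that[unfolded d_def]; assumption)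
      qed
      have \<sigma>'b: "norm (\<sigma>' t) \<le> 2 * norm d" if t: "t \<in> {0..1}" for t
      proof -
        have "norm (\<sigma>' t) \<le> norm (\<sigma>' t - d) + norm d" using norm_triangle_ineq2[of "\<sigma>' t" d] by simp
        also have "\<dots> \<le> \<eta> * norm d + norm d" using \<sigma>e t by auto
        also have "\<dots> \<le> 2 * norm d" using mult_right_mono[OF eta1 norm_ge_zero[of d]] by simp
        finally show ?thesis .
      qed
      have \<sigma>r: "\<sigma> t \<in> ball xbar r" if t: "t \<in> {0..1}" for t
      proof -
        have "norm (\<sigma> t - \<sigma> 0) \<le> 2 * norm d * t"
          by (rule curve_bound[OF V\<sigma>]) (use \<sigma>d \<sigma>'b t in auto)
        also have "\<dots> \<le> 2 * norm d" using t by (simp add: mult_right_le_one_le)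
        finally have "norm (\<sigma> t - z) < r/2" using dr \<sigma>0 by simp
        then have "norm (\<sigma> t - xbar) < r"
          using norm_diff_triangle_less[OF \<open>norm (\<sigma> t - z) < r/2\<close> z(4)] r0 by linarith
        then show ?thesis by (simp add: dist_norm norm_minus_commute)
      qed
      have \<sigma>c: "continuous_on V\<sigma> \<sigma>"
        using \<sigma>d by (meson continuous_at_imp_continuous_on has_vector_derivative_continuous)
      define V where "V = V\<sigma> \<inter> \<sigma> -` ball xbar r"
      have oV: "open V" unfolding V_def by (rule continuous_open_preimage[OF \<sigma>c V\<sigma>(1) open_ball])
      have V01: "{0..1} \<subseteq> V" using V\<sigma>(2) \<sigma>r by (auto simp: V_def)
      have VU: "\<sigma> ` V \<subseteq> U" using rU by (auto simp: V_def)
      have g1: "((H \<circ> \<sigma>) has_vector_derivative blinfun_apply (H' (\<sigma> t)) (\<sigma>' t)) (at t)" if t: "t \<in> V" for t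
      proof -
        have "((H \<circ> \<sigma>) has_derivative (blinfun_apply (H' (\<sigma> t)) \<circ> (\<lambda>h. h *\<^sub>R \<sigma>' t))) (at t)"
          apply (rule diff_chain_at)
          using \<sigma>d t apply (simp add: V_def has_vector_derivative_def)
          using Hd VU t by blast
        then show ?thesis
          by (simp add: has_vector_derivative_def o_def blinfun.scaleR_right)
      qed
      have g2: "continuous_on V (\<lambda>t. blinfun_apply (H' (\<sigma> t)) (\<sigma>' t))"
      proof -
        have "continuous_on V (\<lambda>t. H' (\<sigma> t))"
          apply (rule continuous_on_compose2[OF H'c _ VU])
          using \<sigma>c by (rule continuous_on_subset) (auto simp: V_def)
        moreover have "continuous_on V \<sigma>'"
          using \<sigma>'c by (rule continuous_on_subset) (auto simp: V_def)
        ultimately show ?thesis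
          by (intro continuous_intros)
      qed
      have g3: "(H \<circ> \<sigma>) ` {0..1} \<subseteq> H ` (C \<inter> U)"
          using \<sigma>C \<sigma>r rU by fastforce
      have g4: "(H \<circ> \<sigma>) 0 = y" using \<sigma>0 z by simp
      have g5: "(H \<circ> \<sigma>) 1 = y'" using \<sigma>1 z' by simp
      have g6: "norm (blinfun_apply (H' (\<sigma> t)) (\<sigma>' t) - (y' - y)) \<le> \<epsilon> * norm (y' - y)" if t: "t \<in> {0..1}" for t
      proof -
        have lin: "norm (H z' - H z - blinfun_apply A d) \<le> norm d * \<kappa>"
          unfolding d_def A_def
        proof (rule differentiable_bound_linearization[where S="ball xbar r" and f'="\<lambda>x. blinfun_apply (H' x)"])
          fix s :: real assume s: "s \<in> {0..1}"
          have "(1 - s) *\<^sub>R z + s *\<^sub>R z' \<in> ball xbar r"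
            apply (rule convexD[OF convex_ball])
            using z(4) z'(4) s r0 by (auto simp: dist_norm norm_minus_commute)
          moreover have "(1 - s) *\<^sub>R z + s *\<^sub>R z' = z + s *\<^sub>R (z' - z)"
            by (simp add: algebra_simps)
          ultimately show "z + s *\<^sub>R (z' - z) \<in> ball xbar r" by simp
        next
          fix x assume "x \<in> ball xbar r"
          then show "(H has_derivative blinfun_apply (H' x)) (at x within ball xbar r)"
            using Hd rU by (blast intro: has_derivative_at_withinI)
        next
          fix x assume x: "x \<in> ball xbar r"
          have "onorm (blinfun_apply (H' x) - blinfun_apply (H' xbar)) = norm (H' x - H' xbar)"
            by (simp add: norm_blinfun.rep_eq minus_blinfun.rep_eq fun_diff_def)
          then show "onorm (blinfun_apply (H' x) - blinfun_apply (H' xbar)) \<le> \<kappa>"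
            using rk[OF x] by (simp add: A_def)
        next
          show "xbar \<in> ball xbar r" using r0 by simp
        qed
        have w: "\<sigma> t \<in> ball xbar r" using \<sigma>r t .
        have n1: "norm (blinfun_apply (H' (\<sigma> t)) (\<sigma>' t) - blinfun_apply A (\<sigma>' t)) \<le> \<kappa> * (2 * norm d)"
        proof -
          have "norm (blinfun_apply (H' (\<sigma> t)) (\<sigma>' t) - blinfun_apply A (\<sigma>' t))
                = norm (blinfun_apply (H' (\<sigma> t) - A) (\<sigma>' t))" by (simp add: blinfun.diff_left)
          also have "\<dots> \<le> norm (H' (\<sigma> t) - A) * norm (\<sigma>' t)" by (rule norm_blinfun)
          also have "\<dots> \<le> \<kappa> * (2 * norm d)"
            using rk[OF w] \<sigma>'b[OF t] k0 by (intro mult_mono) auto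
          finally show ?thesis .
        qed
        have n2: "norm (blinfun_apply A (\<sigma>' t) - blinfun_apply A d) \<le> norm A * (\<eta> * norm d)"
        proof -
          have "norm (blinfun_apply A (\<sigma>' t) - blinfun_apply A d) = norm (blinfun_apply A (\<sigma>' t - d))"
            by (simp add: blinfun.diff_right)
          also have "\<dots> \<le> norm A * norm (\<sigma>' t - d)" by (rule norm_blinfun)
          also have "\<dots> \<le> norm A * (\<eta> * norm d)" using \<sigma>e t by (intro mult_left_mono) auto
          finally show ?thesis .
        qed
        have "norm (blinfun_apply (H' (\<sigma> t)) (\<sigma>' t) - (y' - y))
              \<le> norm (blinfun_apply (H' (\<sigma> t)) (\<sigma>' t) - blinfun_apply A (\<sigma>' t))
                + norm (blinfun_apply A (\<sigma>' t) - blinfun_apply A d)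
                + norm (H z' - H z - blinfun_apply A d)"
        proof -
          define P where "P = blinfun_apply (H' (\<sigma> t)) (\<sigma>' t) - blinfun_apply A (\<sigma>' t)"
          define Q where "Q = blinfun_apply A (\<sigma>' t) - blinfun_apply A d"
          define R where "R = H z' - H z - blinfun_apply A d"
          have "blinfun_apply (H' (\<sigma> t)) (\<sigma>' t) - (y' - y) = P + Q - R"
            using z(2) z'(2) by (simp add: P_def Q_def R_def algebra_simps)
          moreover have "norm (P + Q - R) \<le> norm P + norm Q + norm R"
            using norm_triangle_ineq4[of "P + Q" R] norm_triangle_ineq[of P Q] by linarith
          ultimately show ?thesis unfolding P_def[symmetric] Q_def[symmetric] R_def[symmetric] by simp
        qed
        also have "\<dots> \<le> (3 * \<kappa> + norm A * \<eta>) * norm d"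
          using n1 n2 lin by (simp add: algebra_simps)
        also have "\<dots> \<le> (\<epsilon> * m / 2) * norm d"
          using kA by (intro mult_right_mono) auto
        also have "\<dots> \<le> \<epsilon> * norm (y' - y)"
        proof -
          have a1: "norm (blinfun_apply A d) - norm (H z' - H z) \<le> norm (blinfun_apply A d - (H z' - H z))"
            by (rule norm_triangle_ineq2)
          have a2: "norm (blinfun_apply A d - (H z' - H z)) = norm (H z' - H z - blinfun_apply A d)"
            by (rule norm_minus_commute)
          have a3: "m * norm d \<le> norm (blinfun_apply A d)" by (rule mA)
          have a4: "\<kappa> * norm d \<le> m/2 * norm d" using km by (intro mult_right_mono) auto
          have a5: "m/2 * norm d = m * norm d / 2" by simp
          have a6: "norm d * \<kappa> = \<kappa> * norm d" by simp
          have "m/2 * norm d \<le> norm (H z' - H z)"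
            using a1 a2 a3 a4 a5 a6 lin by linarith
          then have "m/2 * norm d \<le> norm (y' - y)" using z(2) z'(2) by simp
          then have "\<epsilon> * (m/2 * norm d) \<le> \<epsilon> * norm (y' - y)" using e0 by (intro mult_left_mono) auto
          then show ?thesis by simp
        qed
        finally show ?thesis .
      qed
      show "\<exists>\<gamma> \<gamma>' V. open V \<and> {0..1::real} \<subseteq> V
             \<and> (\<forall>t\<in>V. (\<gamma> has_vector_derivative \<gamma>' t) (at t))
             \<and> continuous_on V \<gamma>'
             \<and> \<gamma> ` {0..1} \<subseteq> H ` (C \<inter> U) \<and> \<gamma> 0 = y \<and> \<gamma> 1 = y'
             \<and> (\<forall>t\<in>{0..1}. norm (\<gamma>' t - (y' - y)) \<le> \<epsilon> * norm (y' - y))"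
        apply (rule exI[of _ "H \<circ> \<sigma>"], rule exI[of _ "\<lambda>t. blinfun_apply (H' (\<sigma> t)) (\<sigma>' t)"], rule exI[of _ V])
        using oV V01 g1 g2 g3 g4 g5 g6 by blast
    qed
  qed
qed

end
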